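(* For every $\theta\in\Theta$, the optimality gap satisfies $\Delta(\theta)\le\sqrt{2\log v(\theta)}$, where $v(\theta)=\sup_{\theta'\in\Theta}d_2(p_\theta\|p_{\theta'})$.
   Context: Each $\theta\in\Theta$ defines a policy of an MDP inducing a trajectory distribution $p_\theta$; the return satisfies $\mathcal R(\tau)\in[0,1]$, $J(\theta)=\mathbb E_{\tau\sim p_\theta}[\mathcal R(\tau)]$, $J^*=\sup_{\theta}J(\theta)$ and $\Delta(\theta)=J^*-J(\theta)$. For probability measures $P\ll Q$, $d_2(P\|Q)=\int(\frac{dP}{dQ})^2dQ$ ($+\infty$ if $P\not\ll Q$). *)

theory Defs
  imports "HOL-Probability.Probability"
begin

text \<open>In Isabelle, "absolutely_continuous Q P" means P << Q, and RN_deriv Q P = dP/dQ.\<close>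
definition d2 :: "'b measure \<Rightarrow> 'b measure \<Rightarrow> ennreal" where
  "d2 P Q = (if sets P = sets Q \<and> absolutely_continuous Q P
             then (\<integral>\<^sup>+ x. (RN_deriv Q P x)\<^sup>2 \<partial>Q) else \<infinity>)"

definition expected_return :: "('a \<Rightarrow> 'b measure) \<Rightarrow> ('b \<Rightarrow> real) \<Rightarrow> 'a \<Rightarrow> real" where
  "expected_return p R \<theta> = (\<integral> \<tau>. R \<tau> \<partial>(p \<theta>))"

definition opt_return :: "'a set \<Rightarrow> ('a \<Rightarrow> 'b measure) \<Rightarrow> ('b \<Rightarrow> real) \<Rightarrow> real" where
  "opt_return \<Theta> p R = (SUP \<theta>\<in>\<Theta>. expected_return p R \<theta>)"

definition opt_gap :: "'a set \<Rightarrow> ('a \<Rightarrow> 'b measure) \<Rightarrow> ('b \<Rightarrow> real) \<Rightarrow> 'a \<Rightarrow> real" where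
  "opt_gap \<Theta> p R \<theta> = opt_return \<Theta> p R - expected_return p R \<theta>"

definition vdiv :: "'a set \<Rightarrow> ('a \<Rightarrow> 'b measure) \<Rightarrow> 'a \<Rightarrow> ennreal" where
  "vdiv \<Theta> p \<theta> = (SUP \<theta>'\<in>\<Theta>. d2 (p \<theta>) (p \<theta>'))"

end

theory Submission
  imports Defs
begin

lemma real_bound:
  fixes a A v :: real
  assumes a1: "a \<le> 1" and A0: "0 \<le> A" and t: "\<And>t. t > 0 \<Longrightarrow> a \<le> (t*A + 1/t)/2"
    and v: "1 + A \<le> v"
  shows "a \<le> sqrt (2 * ln v)"
proof (cases "a \<le> 0")
  case True
  have "0 \<le> ln v" using v A0 by simp
  then show ?thesis using True by (meson order_trans real_sqrt_ge_zero mult_nonneg_nonneg zero_le_numeral)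
next
  case False
  hence apos: "a > 0" by simp
  have sq: "a^2 \<le> A"
  proof (cases "A = 0")
    case True
    have "a \<le> (1/a * A + 1/(1/a))/2" using t[of "1/a"] apos by simp
    with True apos show ?thesis by simp
  next
    case False
    hence Ap: "A > 0" using A0 by simp
    have "a \<le> (1/sqrt A * A + 1/(1/sqrt A))/2" using t[of "1/sqrt A"] Ap by simp
    also have "1/sqrt A * A = sqrt A" using Ap real_div_sqrt[of A] by simp
    finally have "a \<le> sqrt A" by simp
    hence "a^2 \<le> (sqrt A)^2" using apos by (intro power_mono) auto
    then show ?thesis using A0 by simp
  qed
  have a2: "a^2 \<le> 1" using a1 apos by (simp add: power_le_one)
  have vpos: "v > 0" using v A0 by simp
  have "ln (1/v) \<le> 1/v - 1" using vpos by (intro ln_le_minus_one) simp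
  hence lnv: "1 - 1/v \<le> ln v" using vpos by (simp add: ln_div)
  have "1 - 1/(1+A) \<le> 1 - 1/v" using v A0 by (simp add: frac_le)
  also have "1 - 1/(1+A) = A/(1+A)" using A0 by (simp add: field_simps)
  finally have k: "A/(1+A) \<le> ln v" using lnv by simp
  have "a^2 \<le> 2 * (A/(1+A))"
  proof (cases "A \<le> 1")
    case True
    have "A \<le> 2 * (A/(1+A))" using True A0 mult_left_le[of A A] by (simp add: field_simps)
    then show ?thesis using sq by simp
  next
    case False
    have "1 \<le> 2 * (A/(1+A))" using False by (simp add: field_simps)
    then show ?thesis using a2 by simp
  qed
  hence "a^2 \<le> 2 * ln v" using k by simp
  then show ?thesis using apos by (simp add: real_le_rsqrt)
qed

lemma pointwise:
  fixes t u r :: real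
  assumes "t > 0" "0 \<le> r" "r \<le> 1"
  shows "u * r \<le> (t * u^2 + 1/t) / 2"
proof -
  have "0 \<le> (t*u - r)^2" by simp
  hence "2 * t * u * r \<le> t^2 * u^2 + r^2" by (simp add: power2_eq_square algebra_simps)
  also have "r^2 \<le> 1" using assms by (simp add: power_le_one)
  finally have "2 * t * (u * r) \<le> t * (t * u^2 + 1/t)" using assms by (simp add: power2_eq_square algebra_simps)
  hence "2 * (u * r) \<le> t * u^2 + 1/t" using assms by simp
  then show ?thesis by simp
qed

lemma core:
  fixes P Q :: "'b measure" and R :: "'b \<Rightarrow> real" and V :: ennreal
  assumes PQ: "prob_space P" "prob_space Q" and sets: "sets P = sets Q"
    and ac: "absolutely_continuous Q P"
    and Rm[measurable]: "R \<in> borel_measurable Q" and Rr: "\<And>x. x \<in> space Q \<Longrightarrow> 0 \<le> R x \<and> R x \<le> 1"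
    and DV: "(\<integral>\<^sup>+x. (RN_deriv Q P x)^2 \<partial>Q) \<le> V" and Vfin: "V \<noteq> \<infinity>"
  shows "(\<integral>x. R x \<partial>Q) - (\<integral>x. R x \<partial>P) \<le> sqrt (2 * ln (enn2real V))"
proof -
  interpret Q: prob_space Q by fact
  interpret P: prob_space P by fact
  define g where "g = RN_deriv Q P"
  define L where "L x = enn2real (g x)" for x
  define D where "D = (\<integral>\<^sup>+x. (g x)^2 \<partial>Q)"
  have gm[measurable]: "g \<in> borel_measurable Q" unfolding g_def by simp
  have Lm[measurable]: "L \<in> borel_measurable Q" unfolding L_def by simp
  have dens: "density Q g = P" unfolding g_def using Q.density_RN_deriv[OF ac sets] .
  have sp: "space P = space Q" using sets_eq_imp_space_eq[OF sets] .
  have int1: "(\<integral>\<^sup>+x. g x \<partial>Q) = 1"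
  proof -
    have "(\<integral>\<^sup>+x. g x \<partial>Q) = emeasure (density Q g) (space Q)" by (simp add: emeasure_density)
    also have "\<dots> = emeasure P (space P)" using dens sp by simp
    also have "\<dots> = 1" by (simp add: P.emeasure_space_1)
    finally show ?thesis .
  qed
  have gfin: "AE x in Q. g x \<noteq> \<infinity>" using nn_integral_PInf_AE[OF gm] int1 by simp
  have gL: "AE x in Q. g x = ennreal (L x)" using gfin unfolding L_def
    by eventually_elim (simp add: ennreal_enn2real_if)
  have L0: "\<And>x. 0 \<le> L x" unfolding L_def by simp
  have densL: "density Q (\<lambda>x. ennreal (L x)) = P"
    using dens density_cong[OF gm _ gL] by simp
  have nL: "(\<integral>\<^sup>+x. ennreal (L x) \<partial>Q) = 1" using int1 nn_integral_cong_AE[OF gL] by simp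
  have nL2: "(\<integral>\<^sup>+x. ennreal ((L x)^2) \<partial>Q) = D" unfolding D_def
    by (rule nn_integral_cong_AE) (use gL in eventually_elim, simp add: ennreal_power L0)
  have Dfin: "D \<noteq> \<infinity>" using DV Vfin unfolding D_def g_def by (metis infinity_ennreal_def top.extremum_uniqueI)
  have intL: "integrable Q L" using nL L0 by (simp add: integrable_iff_bounded)
  have intL2: "integrable Q (\<lambda>x. (L x)^2)" using nL2 L0 Dfin
    by (simp add: integrable_iff_bounded top.not_eq_extremum)
  have IL: "(\<integral>x. L x \<partial>Q) = 1" using nL L0 by (simp add: integral_eq_nn_integral)
  have IL2: "(\<integral>x. (L x)^2 \<partial>Q) = enn2real D" using nL2 L0 by (simp add: integral_eq_nn_integral)
  have sqeq: "(\<lambda>x. (1 - L x)^2) = (\<lambda>x. (1 - 2 * L x) + (L x)^2)"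
    by (auto simp: power2_eq_square algebra_simps)
  have intA: "integrable Q (\<lambda>x. (1 - L x)^2)" unfolding sqeq using intL intL2 by simp
  define A where "A = (\<integral>x. (1 - L x)^2 \<partial>Q)"
  have A0: "0 \<le> A" unfolding A_def by simp
  have Aeq: "A = enn2real D - 1" unfolding A_def sqeq using intL intL2 IL IL2
    by (simp add: Bochner_Integration.integral_add Bochner_Integration.integral_diff Q.prob_space)
  have DVr: "enn2real D \<le> enn2real V" using DV Vfin unfolding D_def g_def by (intro enn2real_mono) (auto simp: top.not_eq_extremum)
  have v: "1 + A \<le> enn2real V" using Aeq DVr by simp
  have Rint: "integrable Q R" using Rr by (intro Q.integrable_const_bound[where B=1]) auto
  have LRint: "integrable Q (\<lambda>x. L x * R x)"
    by (rule Bochner_Integration.integrable_bound[OF intL]) (use Rr L0 in \<open>auto simp: mult_left_le\<close>)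
  have EP: "(\<integral>x. R x \<partial>P) = (\<integral>x. L x * R x \<partial>Q)"
    using integral_density[OF Rm Lm, of ] densL L0 by simp
  have diff: "(\<integral>x. R x \<partial>Q) - (\<integral>x. R x \<partial>P) = (\<integral>x. (1 - L x) * R x \<partial>Q)"
    unfolding EP using Rint LRint by (simp add: left_diff_distrib)
  have tb: "(\<integral>x. (1 - L x) * R x \<partial>Q) \<le> (t * A + 1/t)/2" if t: "t > 0" for t
  proof -
    have "(\<integral>x. (1 - L x) * R x \<partial>Q) \<le> (\<integral>x. (t * (1 - L x)^2 + 1/t)/2 \<partial>Q)"
    proof (rule integral_mono)
      show "integrable Q (\<lambda>x. (1 - L x) * R x)" using Rint LRint by (simp add: left_diff_distrib)
      show "integrable Q (\<lambda>x. (t * (1 - L x)^2 + 1/t)/2)" using intA by simp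
      fix x assume "x \<in> space Q"
      then show "(1 - L x) * R x \<le> (t * (1 - L x)^2 + 1/t)/2" using pointwise[OF t] Rr by blast
    qed
    also have "\<dots> = (t * A + 1/t)/2" unfolding A_def using intA by (simp add: Q.prob_space)
    finally show ?thesis .
  qed
  have RQ: "(\<integral>x. R x \<partial>Q) \<le> 1"
  proof -
    have "(\<integral>x. R x \<partial>Q) \<le> (\<integral>x. 1 \<partial>Q)" using Rint Rr by (intro integral_mono) auto
    then show ?thesis by (simp add: Q.prob_space)
  qed
  have RP: "0 \<le> (\<integral>x. R x \<partial>P)" unfolding EP using Rr L0 by (intro integral_nonneg_AE AE_I2) auto
  show ?thesis unfolding diff
    by (rule real_bound[OF _ A0 tb v]) (use RQ RP diff in auto)
qed

theorem lemma5:
  fixes \<Theta> :: "'a set" and p :: "'a \<Rightarrow> 'b measure" and S :: "'b measure"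
    and R :: "'b \<Rightarrow> real" and \<theta> :: 'a
  assumes prob: "\<And>\<theta>'. \<theta>' \<in> \<Theta> \<Longrightarrow> prob_space (p \<theta>')"
    and sets_eq: "\<And>\<theta>'. \<theta>' \<in> \<Theta> \<Longrightarrow> sets (p \<theta>') = sets S"
    and R_meas: "R \<in> borel_measurable S"
    and R_range: "\<And>\<tau>. \<tau> \<in> space S \<Longrightarrow> 0 \<le> R \<tau> \<and> R \<tau> \<le> 1"
    and \<theta>_in: "\<theta> \<in> \<Theta>"
  shows "vdiv \<Theta> p \<theta> = \<infinity> \<or>
         opt_gap \<Theta> p R \<theta> \<le> sqrt (2 * ln (enn2real (vdiv \<Theta> p \<theta>)))"
proof (cases "vdiv \<Theta> p \<theta> = \<infinity>")
  case True
  then show ?thesis by simp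
next
  case False
  let ?b = "sqrt (2 * ln (enn2real (vdiv \<Theta> p \<theta>)))"
  have "(SUP \<theta>'\<in>\<Theta>. expected_return p R \<theta>') \<le> expected_return p R \<theta> + ?b"
  proof (rule cSUP_least)
    show "\<Theta> \<noteq> {}" using \<theta>_in by blast
  next
    fix \<theta>' assume th': "\<theta>' \<in> \<Theta>"
    have le: "d2 (p \<theta>) (p \<theta>') \<le> vdiv \<Theta> p \<theta>" unfolding vdiv_def using th' by (rule SUP_upper)
    hence "d2 (p \<theta>) (p \<theta>') \<noteq> \<infinity>" using False by (metis infinity_ennreal_def top.extremum_uniqueI)
    hence c: "sets (p \<theta>) = sets (p \<theta>') \<and> absolutely_continuous (p \<theta>') (p \<theta>)"
      and d: "d2 (p \<theta>) (p \<theta>') = (\<integral>\<^sup>+ x. (RN_deriv (p \<theta>') (p \<theta>) x)\<^sup>2 \<partial>(p \<theta>'))"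
      unfolding d2_def by (auto split: if_splits)
    have Rm: "R \<in> borel_measurable (p \<theta>')"
      using R_meas measurable_cong_sets[OF sets_eq[OF th'] refl] by blast
    have sp: "space (p \<theta>') = space S" using sets_eq_imp_space_eq[OF sets_eq[OF th']] .
    have "(\<integral>x. R x \<partial>(p \<theta>')) - (\<integral>x. R x \<partial>(p \<theta>)) \<le> ?b"
      by (rule core[OF prob[OF \<theta>_in] prob[OF th'] conjunct1[OF c] conjunct2[OF c] Rm _ _ False])
         (use R_range sp le d in auto)
    then show "expected_return p R \<theta>' \<le> expected_return p R \<theta> + ?b"
      unfolding expected_return_def by simp
  qed
  then show ?thesis unfolding opt_gap_def opt_return_def by simp
qed

end
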